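(* Let $\mathcal H$ be a cycle-reset SHS. Then $\mathcal T_{\mathcal H}$ is decisive with respect to every measurable set $B\in\Sigma_{\mathcal H}$.
   Context: Stochastic hybrid system (SHS) with $n$ variables: a finite set $L$ of locations; a finite set $E$ of edges $e=(\ell,a,\ell')$; for each $\ell$ an invariant $\mathrm{Inv}(\ell)\subseteq\mathbb R^n$ and a flow $\gamma_\ell:\mathbb R^n\times\mathbb R^+\to\mathbb R^n$; for each edge $e$ a guard $\mathcal G(e)\subseteq\mathbb R^n$ and a reset map $\mathbf v\mapsto\mathcal R_e(\mathbf v)\subseteq\mathbb R^n$. States $S_{\mathcal H}=L\times\mathbb R^n$ with $\sigma$-algebra $\Sigma_{\mathcal H}$ (product of discrete and Borel); $s+\tau=(\ell,\gamma_\ell(\mathbf v,\tau))$ for $s=(\ell,\mathbf v)$; $e$ enabled in $(\ell,\mathbf v)$ if $\mathbf v\in\mathcal G(e)$. $I(s)$ is the set of $\tau\ge0$ such that the trajectory stays in $\mathrm{Inv}(\ell)$ on $[0,\tau]$ and some edge is enabled at $s+\tau$ (assumed nonempty). Probabilistic data: delay distributions $\mu_s$ on $\mathbb R^+$ with $\mu_s(I(s))=1$; edge distributions $w_{s'}$ giving positive probability exactly to edges enabled in $s'$; reset distributions $\eta_e(\mathbf v)$ with $\eta_e(\mathbf v)(\mathcal R_e(\mathbf v))=1$. The STS $\mathcal T_{\mathcal H}$ has kernel $\kappa((\ell,\mathbf v),\{\ell'\}\times D)=\int\sum_{e=(\ell,a,\ell')}w_{s+\tau}(e)\,\eta_e(\gamma_\ell(\mathbf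 v,\tau))(D)\,d\mu_s(\tau)$. An edge $e$ is strongly reset if $\eta_e(\mathbf v)$ does not depend on $\mathbf v$; its common value is denoted $\eta^*_e$. $\mathcal H$ is cycle-reset if every cycle of the directed graph on $L$ with an arc $\ell\to\ell'$ whenever some edge $(\ell,a,\ell')\in E$ exists contains an arc $\ell\to\ell'$ such that all edges from $\ell$ to $\ell'$ are strongly reset. STS notions: $\mathbb P^{\mathcal T}_\mu$ induced probability on runs; $\widetilde B=\{s:\mathbb P_{\delta_s}(\mathbf F B)=0\}$; $\mathcal T$ is decisive w.r.t. $B$ if $\mathbb P^{\mathcal T}_\mu(\mathbf F B\vee\mathbf F\widetilde B)=1$ for every initial distribution $\mu$. *)

theory Defs
  imports "HOL-Probability.Probability"
begin

text \<open>An STS is given by a measurable state space M and a Markov kernel K.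
  cyl_prob K A m s is the probability, starting in s, that the first m+1 states
  of the run lie in A 0, ..., A m (finite-dimensional distributions).\<close>

fun cyl_prob :: "('s \<Rightarrow> 's measure) \<Rightarrow> (nat \<Rightarrow> 's set) \<Rightarrow> nat \<Rightarrow> 's \<Rightarrow> ennreal" where
  "cyl_prob K A 0 s = indicator (A 0) s"
| "cyl_prob K A (Suc m) s =
     indicator (A 0) s * (\<integral>\<^sup>+ t. cyl_prob K (\<lambda>i. A (Suc i)) m t \<partial>(K s))"

definition is_run_measure ::
  "'s measure \<Rightarrow> ('s \<Rightarrow> 's measure) \<Rightarrow> 's measure \<Rightarrow> 's stream measure \<Rightarrow> bool" where
  "is_run_measure M K \<mu> P \<longleftrightarrow>
     sets P = sets (stream_space M) \<and> prob_space P \<and>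
     (\<forall>A m. (\<forall>i. A i \<in> sets M) \<longrightarrow>
        emeasure P {\<omega> \<in> space (stream_space M). \<forall>i\<le>m. \<omega> !! i \<in> A i}
          = (\<integral>\<^sup>+ s. cyl_prob K A m s \<partial>\<mu>))"

definition ev_set :: "'s measure \<Rightarrow> 's set \<Rightarrow> 's stream set" where
  "ev_set M B = {\<omega> \<in> space (stream_space M). \<exists>i. \<omega> !! i \<in> B}"

definition avoid_set :: "'s measure \<Rightarrow> ('s \<Rightarrow> 's measure) \<Rightarrow> 's set \<Rightarrow> 's set" where
  "avoid_set M K B = {s \<in> space M. \<forall>P. is_run_measure M K (return M s) P \<longrightarrow>
                        emeasure P (ev_set M B) = 0}"

definition decisive :: "'s measure \<Rightarrow> ('s \<Rightarrow> 's measure) \<Rightarrow> 's set \<Rightarrow> bool" where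
  "decisive M K B \<longleftrightarrow>
     (\<forall>\<mu> P. prob_space \<mu> \<and> sets \<mu> = sets M \<and> is_run_measure M K \<mu> P \<longrightarrow>
        emeasure P (ev_set M B \<union> ev_set M (avoid_set M K B)) = 1)"

text \<open>Locations: a finite type 'l; variables: real ^ 'n; edges (l, a, l').\<close>

definition src :: "'l \<times> 'a \<times> 'l \<Rightarrow> 'l" where "src e = fst e"
definition tgt :: "'l \<times> 'a \<times> 'l \<Rightarrow> 'l" where "tgt e = snd (snd e)"

definition shs_space :: "('l \<times> (real ^ 'n)) measure" where
  "shs_space = count_space UNIV \<Otimes>\<^sub>M borel"

definition shift :: "('l \<Rightarrow> real ^ 'n \<Rightarrow> real \<Rightarrow> real ^ 'n) \<Rightarrow> 'l \<times> (real ^ 'n) \<Rightarrow> real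
                       \<Rightarrow> 'l \<times> (real ^ 'n)" where
  "shift \<gamma> s \<tau> = (fst s, \<gamma> (fst s) (snd s) \<tau>)"

definition enabled :: "('l \<times> 'a \<times> 'l \<Rightarrow> (real ^ 'n) set) \<Rightarrow> 'l \<times> 'a \<times> 'l
                        \<Rightarrow> 'l \<times> (real ^ 'n) \<Rightarrow> bool" where
  "enabled G e s \<longleftrightarrow> src e = fst s \<and> snd s \<in> G e"

definition delay_set ::
  "('l \<times> 'a \<times> 'l) set \<Rightarrow> ('l \<Rightarrow> (real ^ 'n) set) \<Rightarrow> ('l \<Rightarrow> real ^ 'n \<Rightarrow> real \<Rightarrow> real ^ 'n)
    \<Rightarrow> ('l \<times> 'a \<times> 'l \<Rightarrow> (real ^ 'n) set) \<Rightarrow> 'l \<times> (real ^ 'n) \<Rightarrow> real set" where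
  "delay_set E Inv \<gamma> G s = {\<tau>. 0 \<le> \<tau> \<and> (\<forall>t\<in>{0..\<tau>}. \<gamma> (fst s) (snd s) t \<in> Inv (fst s)) \<and>
                                 (\<exists>e\<in>E. enabled G e (shift \<gamma> s \<tau>))}"

definition strongly_reset :: "('l \<times> 'a \<times> 'l \<Rightarrow> real ^ 'n \<Rightarrow> (real ^ 'n) measure)
                               \<Rightarrow> 'l \<times> 'a \<times> 'l \<Rightarrow> bool" where
  "strongly_reset \<eta> e \<longleftrightarrow> (\<forall>v v'. \<eta> e v = \<eta> e v')"

definition loc_arc :: "('l \<times> 'a \<times> 'l) set \<Rightarrow> 'l \<Rightarrow> 'l \<Rightarrow> bool" where
  "loc_arc E l l' \<longleftrightarrow> (\<exists>a. (l, a, l') \<in> E)"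

text \<open>A cycle of the location graph, given as the list of its vertices l_0, ..., l_k
  with l_0 = l_k, k >= 1, and an arc between consecutive vertices.\<close>
definition loc_cycle :: "('l \<times> 'a \<times> 'l) set \<Rightarrow> 'l list \<Rightarrow> bool" where
  "loc_cycle E xs \<longleftrightarrow> 2 \<le> length xs \<and> hd xs = last xs \<and>
      (\<forall>i. Suc i < length xs \<longrightarrow> loc_arc E (xs ! i) (xs ! Suc i))"

definition cycle_reset :: "('l \<times> 'a \<times> 'l) set \<Rightarrow> ('l \<times> 'a \<times> 'l \<Rightarrow> real ^ 'n \<Rightarrow> (real ^ 'n) measure)
                            \<Rightarrow> bool" where
  "cycle_reset E \<eta> \<longleftrightarrow> (\<forall>xs. loc_cycle E xs \<longrightarrow>
      (\<exists>i. Suc i < length xs \<and>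
           (\<forall>a. (xs ! i, a, xs ! Suc i) \<in> E \<longrightarrow> strongly_reset \<eta> (xs ! i, a, xs ! Suc i))))"

text \<open>The well-formedness conditions of an SHS with its probabilistic data, and the
  statement that K is the kernel of the induced STS T_H.\<close>
definition is_shs_sts ::
  "('l \<times> 'a \<times> 'l) set \<Rightarrow> ('l \<Rightarrow> (real ^ 'n) set) \<Rightarrow> ('l \<Rightarrow> real ^ 'n \<Rightarrow> real \<Rightarrow> real ^ 'n)
    \<Rightarrow> ('l \<times> 'a \<times> 'l \<Rightarrow> (real ^ 'n) set) \<Rightarrow> ('l \<times> 'a \<times> 'l \<Rightarrow> real ^ 'n \<Rightarrow> (real ^ 'n) set)
    \<Rightarrow> ('l \<times> (real ^ 'n) \<Rightarrow> real measure) \<Rightarrow> ('l \<times> (real ^ 'n) \<Rightarrow> ('l \<times> 'a \<times> 'l) pmf)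
    \<Rightarrow> ('l \<times> 'a \<times> 'l \<Rightarrow> real ^ 'n \<Rightarrow> (real ^ 'n) measure)
    \<Rightarrow> ('l \<times> (real ^ 'n) \<Rightarrow> ('l \<times> (real ^ 'n)) measure) \<Rightarrow> bool" where
  "is_shs_sts E Inv \<gamma> G R \<mu> w \<eta> K \<longleftrightarrow>
     finite E \<and>
     (\<forall>s. delay_set E Inv \<gamma> G s \<noteq> {}) \<and>
     (\<forall>s. prob_space (\<mu> s) \<and> sets (\<mu> s) = sets borel \<and>
          (AE \<tau> in \<mu> s. \<tau> \<in> delay_set E Inv \<gamma> G s)) \<and>
     (\<forall>s. (\<exists>e\<in>E. enabled G e s) \<longrightarrow> set_pmf (w s) = {e \<in> E. enabled G e s}) \<and>
     (\<forall>e v. prob_space (\<eta> e v) \<and> sets (\<eta> e v) = sets borel \<and>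
            (AE x in \<eta> e v. x \<in> R e v)) \<and>
     K \<in> shs_space \<rightarrow>\<^sub>M prob_algebra shs_space \<and>
     (\<forall>s l' D. D \<in> sets borel \<longrightarrow>
        emeasure (K s) ({l'} \<times> D) =
          (\<integral>\<^sup>+ \<tau>. ennreal (\<Sum>e\<in>{e \<in> E. src e = fst s \<and> tgt e = l'}.
               pmf (w (shift \<gamma> s \<tau>)) e * measure (\<eta> e (\<gamma> (fst s) (snd s) \<tau>)) D) \<partial>(\<mu> s)))"

end

theory Submission
  imports Defs
begin

locale mkern =
  fixes M :: "'s measure" and K :: "'s \<Rightarrow> 's measure"
  assumes K[measurable]: "K \<in> M \<rightarrow>\<^sub>M prob_algebra M"
begin

lemma K_sub[measurable]: "K \<in> M \<rightarrow>\<^sub>M subprob_algebra M"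
  by (rule measurable_prob_algebraD[OF K])

lemma K_space: "s \<in> space M \<Longrightarrow> K s \<in> space (prob_algebra M)"
  using K by (rule measurable_space)

lemma K_prob: "s \<in> space M \<Longrightarrow> prob_space (K s)"
  using K_space by (simp add: space_prob_algebra)

lemma sets_K[measurable_cong]: "s \<in> space M \<Longrightarrow> sets (K s) = sets M"
  using K_space by (simp add: space_prob_algebra)

lemma space_K: "s \<in> space M \<Longrightarrow> space (K s) = space M"
  using sets_K sets_eq_imp_space_eq by blast

lemma cyl_meas[measurable]:
  "(\<And>i. A i \<in> sets M) \<Longrightarrow> cyl_prob K A m \<in> borel_measurable M"
proof (induction m arbitrary: A)
  case 0 then show ?case by simp
next
  case (Suc m)
  have "cyl_prob K (\<lambda>i. A (Suc i)) m \<in> borel_measurable M" using Suc by auto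
  then have "(\<lambda>s. \<integral>\<^sup>+ t. cyl_prob K (\<lambda>i. A (Suc i)) m t \<partial>K s) \<in> borel_measurable M"
    by (intro measurable_compose[OF K_sub nn_integral_measurable_subprob_algebra])
  then show ?case using Suc.prems by simp
qed

lemma cyl_le1: "s \<in> space M \<Longrightarrow> cyl_prob K A m s \<le> 1"
proof (induction m arbitrary: A s)
  case 0 then show ?case by (simp add: indicator_def)
next
  case (Suc m)
  interpret prob_space "K s" using K_prob Suc.prems .
  have "(\<integral>\<^sup>+ t. cyl_prob K (\<lambda>i. A (Suc i)) m t \<partial>K s) \<le> (\<integral>\<^sup>+ t. 1 \<partial>K s)"
    by (intro nn_integral_mono) (auto simp: space_K Suc.prems intro: Suc.IH)
  also have "\<dots> = 1" by (simp add: emeasure_space_1)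
  finally show ?case by (simp add: indicator_def)
qed

lemma cyl_mono_A:
  "(\<And>i. A i \<subseteq> A' i) \<Longrightarrow> cyl_prob K A m s \<le> cyl_prob K A' m s"
proof (induction m arbitrary: A A' s)
  case 0 then show ?case by (auto simp: indicator_def)
next
  case (Suc m)
  have "(\<integral>\<^sup>+ t. cyl_prob K (\<lambda>i. A (Suc i)) m t \<partial>K s) \<le> (\<integral>\<^sup>+ t. cyl_prob K (\<lambda>i. A' (Suc i)) m t \<partial>K s)"
    by (intro nn_integral_mono Suc.IH) (use Suc.prems in auto)
  then show ?case using Suc.prems[of 0] by (auto simp: indicator_def intro: mult_mono)
qed

lemma cyl_Suc_le: "s \<in> space M \<Longrightarrow> cyl_prob K A (Suc m) s \<le> cyl_prob K A m s"
proof (induction m arbitrary: A s)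
  case 0
  interpret prob_space "K s" using K_prob 0 .
  have "(\<integral>\<^sup>+ t. cyl_prob K (\<lambda>i. A (Suc i)) 0 t \<partial>K s) \<le> (\<integral>\<^sup>+ t. 1 \<partial>K s)"
    by (intro nn_integral_mono) (auto simp: indicator_def)
  then have "indicator (A 0) s * (\<integral>\<^sup>+ t. cyl_prob K (\<lambda>i. A (Suc i)) 0 t \<partial>K s) \<le> indicator (A 0) s * 1"
    by (intro mult_left_mono) (auto simp: emeasure_space_1)
  then show ?case by (simp only: cyl_prob.simps(1)[of K A] cyl_prob.simps(2)[of K A] mult_1_right)
next
  case (Suc m)
  have "(\<integral>\<^sup>+ t. cyl_prob K (\<lambda>i. A (Suc i)) (Suc m) t \<partial>K s) \<le> (\<integral>\<^sup>+ t. cyl_prob K (\<lambda>i. A (Suc i)) m t \<partial>K s)"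
    by (intro nn_integral_mono Suc.IH) (use Suc.prems in \<open>auto simp: space_K\<close>)
  then have "indicator (A 0) s * (\<integral>\<^sup>+ t. cyl_prob K (\<lambda>i. A (Suc i)) (Suc m) t \<partial>K s) \<le> indicator (A 0) s * (\<integral>\<^sup>+ t. cyl_prob K (\<lambda>i. A (Suc i)) m t \<partial>K s)"
    by (intro mult_left_mono) auto
  then show ?case by (simp only: cyl_prob.simps(2)[of K A])
qed

lemma cyl_decseq: "s \<in> space M \<Longrightarrow> decseq (\<lambda>m. cyl_prob K A m s)"
  by (rule decseq_SucI) (rule cyl_Suc_le)



lemma stream_cyl_sets:
  assumes [measurable]: "A \<in> sets M"
  shows "{\<omega> \<in> space (stream_space M). \<forall>i\<le>m. \<omega> !! i \<in> A} \<in> sets (stream_space M)"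
  by measurable

lemma stream_all_sets:
  assumes [measurable]: "A \<in> sets M"
  shows "{\<omega> \<in> space (stream_space M). \<forall>i. \<omega> !! i \<in> A} \<in> sets (stream_space M)"
proof -
  have "{\<omega> \<in> space (stream_space M). \<forall>i. \<omega> !! i \<in> A} = (\<Inter>i. {\<omega> \<in> space (stream_space M). \<omega> !! i \<in> A})"
    by auto
  also have "\<dots> \<in> sets (stream_space M)" by measurable
  finally show ?thesis .
qed

lemma run_all:
  assumes run: "is_run_measure M K \<mu> P" and A[measurable]: "A \<in> sets M"
    and smu: "sets \<mu> = sets M" and fin: "emeasure \<mu> (space \<mu>) \<noteq> \<infinity>"
  shows "emeasure P {\<omega> \<in> space (stream_space M). \<forall>i. \<omega> !! i \<in> A}
       = (\<integral>\<^sup>+s. (INF m. cyl_prob K (\<lambda>_. A) m s) \<partial>\<mu>)"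
proof -
  define S where "S = (\<lambda>m. {\<omega> \<in> space (stream_space M). \<forall>i\<le>m. \<omega> !! i \<in> A})"
  have sP: "sets P = sets (stream_space M)" using run unfolding is_run_measure_def by (elim conjE)
  have pP: "prob_space P" using run unfolding is_run_measure_def by (elim conjE)
  have runeq: "\<And>A m. (\<forall>i. A i \<in> sets M) \<Longrightarrow> emeasure P {\<omega> \<in> space (stream_space M). \<forall>i\<le>m. \<omega> !! i \<in> A i}
          = (\<integral>\<^sup>+ s. cyl_prob K A m s \<partial>\<mu>)"
    using run unfolding is_run_measure_def by blast
  interpret P: prob_space P by (rule pP)
  have meas: "S m \<in> sets P" for m unfolding sP S_def by (rule stream_cyl_sets[OF A])
  have dec: "decseq S" unfolding decseq_def S_def by force
  have inter: "(\<Inter>m. S m) = {\<omega> \<in> space (stream_space M). \<forall>i. \<omega> !! i \<in> A}" 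
    unfolding S_def by blast
  have eq: "emeasure P (S m) = (\<integral>\<^sup>+s. cyl_prob K (\<lambda>_. A) m s \<partial>\<mu>)" for m
    unfolding S_def using runeq[of "\<lambda>_. A" m] A by blast
  have "emeasure P (\<Inter>m. S m) = (INF m. emeasure P (S m))"
    by (rule INF_emeasure_decseq[symmetric]) (use meas dec in \<open>auto simp: P.emeasure_eq_measure\<close>)
  also have "\<dots> = (INF m. (\<integral>\<^sup>+s. cyl_prob K (\<lambda>_. A) m s \<partial>\<mu>))" using eq by presburger
  also have "\<dots> = (\<integral>\<^sup>+s. (INF m. cyl_prob K (\<lambda>_. A) m s) \<partial>\<mu>)"
  proof (rule nn_integral_monotone_convergence_INF_AE[symmetric])
    show "AE x in \<mu>. cyl_prob K (\<lambda>_. A) (Suc i) x \<le> cyl_prob K (\<lambda>_. A) i x" for i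
      by (rule AE_I2) (rule cyl_Suc_le, simp add: sets_eq_imp_space_eq[OF smu])
    show "cyl_prob K (\<lambda>_. A) i \<in> borel_measurable \<mu>" for i
      unfolding measurable_cong_sets[OF smu refl] by (rule cyl_meas) (rule A)
    have "(\<integral>\<^sup>+s. cyl_prob K (\<lambda>_. A) 0 s \<partial>\<mu>) \<le> (\<integral>\<^sup>+s. 1 \<partial>\<mu>)"
      by (intro nn_integral_mono) (simp add: indicator_def)
    also have "\<dots> < \<infinity>" using fin by (simp add: less_top)
    finally show "(\<integral>\<^sup>+s. cyl_prob K (\<lambda>_. A) 0 s \<partial>\<mu>) < \<infinity>" .
  qed
  finally show ?thesis unfolding inter .
qed

end



fun cylf :: "('s \<Rightarrow> 's measure) \<Rightarrow> (nat \<Rightarrow> 's set) \<Rightarrow> nat \<Rightarrow> ('s \<Rightarrow> ennreal) \<Rightarrow> 's \<Rightarrow> ennreal" where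
  "cylf K A 0 f s = indicator (A 0) s * f s"
| "cylf K A (Suc m) f s = indicator (A 0) s * (\<integral>\<^sup>+ t. cylf K (\<lambda>i. A (Suc i)) m f t \<partial>K s)"

lemma cyl_prob_cylf_fun: "cyl_prob K A m = cylf K A m (\<lambda>_. 1)"
proof (induction m arbitrary: A)
  case 0 show ?case by (simp add: fun_eq_iff)
next
  case (Suc m)
  show ?case by (rule ext) (simp add: Suc.IH[of "\<lambda>i. A (Suc i)"])
qed

lemma cyl_prob_cylf: "cyl_prob K A m s = cylf K A m (\<lambda>_. 1) s"
  by (simp add: cyl_prob_cylf_fun)

lemma cylf_0_fun: "cylf K A 0 f = (\<lambda>s. indicator (A 0) s * f s)"
  by (simp add: fun_eq_iff)

lemma cylf_shift:
  "cylf K A m (\<lambda>t. \<integral>\<^sup>+y. indicator (A (Suc m)) y * f y \<partial>K t) s = cylf K A (Suc m) f s"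
proof (induction m arbitrary: A s)
  case 0 then show ?case by (simp add: cylf_0_fun)
next
  case (Suc m)
  have "cylf K A (Suc m) (\<lambda>t. \<integral>\<^sup>+y. indicator (A (Suc (Suc m))) y * f y \<partial>K t) s
      = indicator (A 0) s * (\<integral>\<^sup>+ t. cylf K (\<lambda>i. A (Suc i)) m (\<lambda>t. \<integral>\<^sup>+y. indicator (A (Suc (Suc m))) y * f y \<partial>K t) t \<partial>K s)"
    by (simp only: cylf.simps(2)[of K A])
  also have "\<dots> = indicator (A 0) s * (\<integral>\<^sup>+ t. cylf K (\<lambda>i. A (Suc i)) (Suc m) f t \<partial>K s)"
    using Suc.IH[of "\<lambda>i. A (Suc i)"] by simp
  also have "\<dots> = cylf K A (Suc (Suc m)) f s"
    by (simp only: cylf.simps(2)[of K A])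
  finally show ?case .
qed

context mkern begin

lemma run_exists:
  assumes s: "s \<in> space M"
  shows "\<exists>P. is_run_measure M K (return M s) P"
proof -
  define Pk where "Pk = (\<lambda>i (\<omega>::nat \<Rightarrow> 's). if i = 0 then return M s else K (\<omega> (i - 1)))"
  have Pk_meas: "Pk i \<in> PiM {0..<i} (\<lambda>_. M) \<rightarrow>\<^sub>M subprob_algebra M" for i
  proof (cases "i = 0")
    case True
    have "return M s \<in> space (subprob_algebra M)"
      using s by (simp add: space_subprob_algebra subprob_space_return)
    then show ?thesis unfolding Pk_def using True by simp
  next
    case False
    then have "i - 1 \<in> {0..<i}" by simp
    then have "(\<lambda>\<omega>. \<omega> (i - 1)) \<in> PiM {0..<i} (\<lambda>_. M) \<rightarrow>\<^sub>M M"
      by (rule measurable_component_singleton)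
    then have "(\<lambda>\<omega>. K (\<omega> (i - 1))) \<in> PiM {0..<i} (\<lambda>_. M) \<rightarrow>\<^sub>M subprob_algebra M"
      by (rule measurable_compose) (rule K_sub)
    then show ?thesis unfolding Pk_def using False by simp
  qed
  have Pk_prob: "prob_space (Pk i \<omega>)" if "\<omega> \<in> space (PiM {0..<i} (\<lambda>_. M))" for i \<omega>
  proof (cases "i = 0")
    case True then show ?thesis unfolding Pk_def using s by (simp add: prob_space_return)
  next
    case False
    then have "\<omega> (i - 1) \<in> space M" using that by (auto simp: space_PiM PiE_iff)
    then show ?thesis unfolding Pk_def using False by (simp add: K_prob)
  qed
  interpret IT: Ionescu_Tulcea Pk "\<lambda>_. M"
    by (intro Ionescu_Tulcea.intro Pk_meas Pk_prob)
  define u :: "nat \<Rightarrow> 's" where "u = (\<lambda>_. undefined)"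
  have u: "u \<in> space (PiM {0..<0} (\<lambda>_. M))" unfolding u_def by simp
  have fwd: "(\<integral>\<^sup>+x. indicator (PiE {0..<Suc m} A) x * f (x m) \<partial>IT.C 0 (Suc m) u) = cylf K A m f s"
    if A: "\<And>i. A i \<in> sets M" and f: "f \<in> borel_measurable M" for m A f
    using f
  proof (induction m arbitrary: f)
    case 0
    have C1: "IT.C 0 (Suc 0) u = IT.eP 0 u"
      using bind_return[OF IT.measurable_eP[of 0] u] by simp
    have Fm: "(\<lambda>x. indicator (PiE {0..<Suc 0} A) x * f (x 0)) \<in> borel_measurable (PiM {0..<Suc 0} (\<lambda>_. M))"
    proof -
      have "PiE {0..<Suc 0} A \<in> sets (PiM {0..<Suc 0} (\<lambda>_. M))"
        by (rule sets_PiM_I_finite) (auto simp: A)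
      then show ?thesis using 0 by measurable
    qed
    have "(\<integral>\<^sup>+x. indicator (PiE {0..<Suc 0} A) x * f (x 0) \<partial>IT.C 0 (Suc 0) u)
        = (\<integral>\<^sup>+y. indicator (PiE {0..<Suc 0} A) (u(0 := y)) * f ((u(0 := y)) 0) \<partial>Pk 0 u)"
      unfolding C1 using u Fm by (intro IT.nn_integral_eP) auto
    also have "\<dots> = (\<integral>\<^sup>+y. indicator (A 0) y * f y \<partial>return M s)"
    proof -
      have "indicator (PiE {0..<Suc 0} A) (u(0 := y)) = (indicator (A 0) y :: ennreal)" for y
        unfolding u_def by (auto simp: indicator_def PiE_iff extensional_def)
      then show ?thesis unfolding Pk_def by simp
    qed
    also have "\<dots> = indicator (A 0) s * f s"
      using s 0 A by (intro nn_integral_return) auto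
    finally show ?case by simp
  next
    case (Suc m)
    define g where "g = (\<lambda>t. \<integral>\<^sup>+y. indicator (A (Suc m)) y * f y \<partial>K t)"
    have gm: "g \<in> borel_measurable M" unfolding g_def
      using Suc.prems A by (intro measurable_compose[OF K_sub nn_integral_measurable_subprob_algebra]) auto
    have sC: "sets (IT.C 0 (Suc m) u) = sets (PiM {0..<Suc m} (\<lambda>_. M))"
      using IT.sets_C[OF u, of "Suc m"] by simp
    have spC: "space (IT.C 0 (Suc m) u) = space (PiM {0..<Suc m} (\<lambda>_. M))"
      using sets_eq_imp_space_eq[OF sC] .
    have CS: "IT.C 0 (Suc (Suc m)) u = IT.C 0 (Suc m) u \<bind> IT.eP (Suc m)" by simp
    have PiA: "PiE {0..<Suc (Suc m)} A \<in> sets (PiM {0..<Suc (Suc m)} (\<lambda>_. M))"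
      by (rule sets_PiM_I_finite) (auto simp: A)
    have Fm: "(\<lambda>x. indicator (PiE {0..<Suc (Suc m)} A) x * f (x (Suc m))) \<in> borel_measurable (PiM {0..<Suc (Suc m)} (\<lambda>_. M))"
      using PiA Suc.prems by measurable
    have ePm: "IT.eP (Suc m) \<in> measurable (IT.C 0 (Suc m) u) (subprob_algebra (PiM {0..<Suc (Suc m)} (\<lambda>_. M)))"
      unfolding measurable_cong_sets[OF sC refl] by (rule IT.measurable_eP)
    have "(\<integral>\<^sup>+x. indicator (PiE {0..<Suc (Suc m)} A) x * f (x (Suc m)) \<partial>IT.C 0 (Suc (Suc m)) u)
       = (\<integral>\<^sup>+x. \<integral>\<^sup>+z. indicator (PiE {0..<Suc (Suc m)} A) z * f (z (Suc m)) \<partial>IT.eP (Suc m) x \<partial>IT.C 0 (Suc m) u)"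
      unfolding CS by (rule nn_integral_bind[OF Fm ePm])
    also have "\<dots> = (\<integral>\<^sup>+x. indicator (PiE {0..<Suc m} A) x * g (x m) \<partial>IT.C 0 (Suc m) u)"
    proof (rule nn_integral_cong)
      fix x assume "x \<in> space (IT.C 0 (Suc m) u)"
      then have x: "x \<in> space (PiM {0..<Suc m} (\<lambda>_. M))" using spC by simp
      then have xe: "x \<in> extensional {0..<Suc m}" by (simp add: space_PiM PiE_iff)
      have xm: "x m \<in> space M" using x by (auto simp: space_PiM PiE_iff)
      have ind: "indicator (PiE {0..<Suc (Suc m)} A) (x(Suc m := y)) = 
           (indicator (PiE {0..<Suc m} A) x * indicator (A (Suc m)) y :: ennreal)" for y
        using xe by (auto simp: indicator_def PiE_iff extensional_def less_Suc_eq)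
      have "(\<integral>\<^sup>+z. indicator (PiE {0..<Suc (Suc m)} A) z * f (z (Suc m)) \<partial>IT.eP (Suc m) x)
          = (\<integral>\<^sup>+y. indicator (PiE {0..<Suc (Suc m)} A) (x(Suc m := y)) * f ((x(Suc m := y)) (Suc m)) \<partial>Pk (Suc m) x)"
        using x Fm by (rule IT.nn_integral_eP)
      also have "\<dots> = (\<integral>\<^sup>+y. indicator (PiE {0..<Suc m} A) x * (indicator (A (Suc m)) y * f y) \<partial>K (x m))"
        unfolding Pk_def ind by (simp add: mult.assoc)
      also have "\<dots> = indicator (PiE {0..<Suc m} A) x * g (x m)"
        unfolding g_def using Suc.prems A xm
        by (intro nn_integral_cmult) (auto simp: measurable_cong_sets[OF sets_K[OF xm] refl])
      finally show "(\<integral>\<^sup>+z. indicator (PiE {0..<Suc (Suc m)} A) z * f (z (Suc m)) \<partial>IT.eP (Suc m) x)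
          = indicator (PiE {0..<Suc m} A) x * g (x m)" .
    qed
    also have "\<dots> = cylf K A m g s" by (rule Suc.IH[OF gm])
    also have "\<dots> = cylf K A (Suc m) f s" unfolding g_def by (rule cylf_shift)
    finally show ?case .
  qed
  have lim_prob: "prob_space IT.PF.lim"
  proof
    have "emeasure IT.PF.lim (IT.PF.emb UNIV {} (space (PiM {} (\<lambda>_. M)))) = emeasure (IT.CI {}) (space (PiM {} (\<lambda>_. M)))"
      by (rule IT.lim) auto
    moreover have "IT.PF.emb UNIV {} (space (PiM {} (\<lambda>_. M))) = space IT.PF.lim"
      by (auto simp: prod_emb_def space_PiM PiE_iff)
    moreover have "emeasure (IT.CI {}) (space (PiM {} (\<lambda>_. M))) = 1"
    proof -
      interpret CI0: prob_space "IT.CI {}" by (rule IT.PF.prob_space_P) auto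
      show ?thesis using CI0.emeasure_space_1 IT.PF.space_P[of "{}"] by simp
    qed
    ultimately show "emeasure IT.PF.lim (space IT.PF.lim) = 1" by simp
  qed
  define Q where "Q = distr IT.PF.lim (stream_space M) to_stream"
  have ts: "to_stream \<in> IT.PF.lim \<rightarrow>\<^sub>M stream_space M"
    unfolding measurable_cong_sets[OF IT.PF.sets_lim refl] by (rule measurable_to_stream)
  have sQ: "sets Q = sets (stream_space M)" unfolding Q_def by simp
  have pQ: "prob_space Q" unfolding Q_def by (rule prob_space.prob_space_distr[OF lim_prob ts])
  have snth_ts: "to_stream X !! n = X n" for X :: "nat \<Rightarrow> 's" and n
    by (simp add: to_stream_def)
  have cyl: "emeasure Q {\<omega> \<in> space (stream_space M). \<forall>i\<le>m. \<omega> !! i \<in> A i}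
          = (\<integral>\<^sup>+ s. cyl_prob K A m s \<partial>return M s)" if A: "\<forall>i. A i \<in> sets M" for A m
  proof -
    have Am[measurable]: "A i \<in> sets M" for i using A by simp
    have Sm: "{\<omega> \<in> space (stream_space M). \<forall>i\<le>m. \<omega> !! i \<in> A i} \<in> sets (stream_space M)"
      by measurable
    have PiA: "PiE {0..<Suc m} A \<in> sets (PiM {0..<Suc m} (\<lambda>_. M))"
      by (rule sets_PiM_I_finite) (auto simp: Am)
    have PiA_sub: "PiE {0..<Suc m} A \<subseteq> PiE {0..<Suc m} (\<lambda>_. space M)"
      using sets.sets_into_space[OF Am] by (auto simp: PiE_iff)
    have pre: "to_stream -` {\<omega> \<in> space (stream_space M). \<forall>i\<le>m. \<omega> !! i \<in> A i} \<inter> space IT.PF.lim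
        = IT.PF.emb UNIV {0..<Suc m} (PiE {0..<Suc m} A)"
      by (auto simp: prod_emb_def space_PiM PiE_iff snth_ts space_stream_space to_stream_in_streams less_Suc_eq_le)
    have "emeasure Q {\<omega> \<in> space (stream_space M). \<forall>i\<le>m. \<omega> !! i \<in> A i}
        = emeasure IT.PF.lim (IT.PF.emb UNIV {0..<Suc m} (PiE {0..<Suc m} A))"
      unfolding Q_def pre[symmetric] by (rule emeasure_distr[OF ts Sm])
    also have "\<dots> = emeasure (IT.CI {0..<Suc m}) (PiE {0..<Suc m} A)"
      by (rule IT.lim) (auto simp: PiA)
    also have "\<dots> = emeasure (IT.C 0 (Suc m) u) (IT.PF.emb {0..<Suc m} {0..<Suc m} (PiE {0..<Suc m} A))"
      unfolding u_def by (rule IT.emeasure_CI) (auto simp: PiA)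
    also have "IT.PF.emb {0..<Suc m} {0..<Suc m} (PiE {0..<Suc m} A) = PiE {0..<Suc m} A"
      by (rule prod_emb_id) (rule PiA_sub)
    also have "emeasure (IT.C 0 (Suc m) u) (PiE {0..<Suc m} A)
        = (\<integral>\<^sup>+x. indicator (PiE {0..<Suc m} A) x * (\<lambda>_. 1) (x m) \<partial>IT.C 0 (Suc m) u)"
      using PiA IT.sets_C[OF u, of "Suc m"] by (simp add: nn_integral_indicator)
    also have "\<dots> = cylf K A m (\<lambda>_. 1) s" by (rule fwd) (auto simp: Am)
    also have "\<dots> = cyl_prob K A m s" by (simp add: cyl_prob_cylf)
    also have "\<dots> = (\<integral>\<^sup>+ s. cyl_prob K A m s \<partial>return M s)"
      using s by (intro nn_integral_return[symmetric] cyl_meas Am)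
    finally show ?thesis .
  qed
  have "is_run_measure M K (return M s) Q"
    unfolding is_run_measure_def using sQ pQ cyl by blast
  then show ?thesis by blast
qed

end

context mkern begin

definition rinf :: "'s set \<Rightarrow> 's \<Rightarrow> ennreal" where
  "rinf B s = (INF m. cyl_prob K (\<lambda>_. space M - B) m s)"

lemma rinf_meas[measurable]: "B \<in> sets M \<Longrightarrow> rinf B \<in> borel_measurable M"
  unfolding rinf_def by (intro borel_measurable_INF cyl_meas) auto

lemma rinf_le1: "s \<in> space M \<Longrightarrow> rinf B s \<le> 1"
  unfolding rinf_def by (rule INF_lower2[of 0]) (simp_all add: indicator_def)

lemma stream_snth_space: "\<omega> \<in> space (stream_space M) \<Longrightarrow> \<omega> !! i \<in> space M"
  by (auto simp: space_stream_space streams_iff_snth)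

lemma ev_set_run:
  assumes B: "B \<in> sets M" and s: "s \<in> space M" and run: "is_run_measure M K (return M s) P"
  shows "emeasure P (ev_set M B) = 1 - rinf B s"
proof -
  have sP: "sets P = sets (stream_space M)"
    using run unfolding is_run_measure_def by (elim conjE)
  have pP: "prob_space P"
    using run unfolding is_run_measure_def by (elim conjE)
  interpret P: prob_space P by (rule pP)
  have spP: "space P = space (stream_space M)" using sets_eq_imp_space_eq[OF sP] .
  define N where "N = {\<omega> \<in> space (stream_space M). \<forall>i. \<omega> !! i \<in> space M - B}"
  have Nm: "N \<in> sets P" unfolding N_def sP by (rule stream_all_sets) (use B in auto)
  have evN: "ev_set M B = space P - N"
  proof (rule set_eqI)
    fix \<omega> show "\<omega> \<in> ev_set M B \<longleftrightarrow> \<omega> \<in> space P - N"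
      unfolding ev_set_def N_def spP using stream_snth_space[of \<omega>] by auto
  qed
  have "emeasure P N = (\<integral>\<^sup>+x. (INF m. cyl_prob K (\<lambda>_. space M - B) m x) \<partial>return M s)"
    unfolding N_def by (rule run_all[OF run]) (use B s in auto)
  also have "\<dots> = rinf B s"
    unfolding rinf_def[symmetric] using s B by (intro nn_integral_return) auto
  finally have eN: "emeasure P N = rinf B s" .
  have fin: "emeasure P N \<noteq> \<infinity>" using P.emeasure_finite[of N] by auto
  show ?thesis unfolding evN using Nm eN by (simp add: emeasure_compl[OF Nm fin] P.emeasure_space_1)
qed

lemma avoid_eq:
  assumes B: "B \<in> sets M"
  shows "avoid_set M K B = {s \<in> space M. rinf B s = 1}"
proof (intro set_eqI iffI)
  fix s assume "s \<in> avoid_set M K B"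
  then have s: "s \<in> space M" and all: "\<And>P. is_run_measure M K (return M s) P \<Longrightarrow> emeasure P (ev_set M B) = 0"
    unfolding avoid_set_def by blast+
  obtain P where run: "is_run_measure M K (return M s) P" using run_exists[OF s] by blast
  have "1 - rinf B s = 0" using all[OF run] ev_set_run[OF B s run] by simp
  then have "1 \<le> rinf B s" by (simp add: diff_eq_0_iff_ennreal)
  then show "s \<in> {s \<in> space M. rinf B s = 1}" using rinf_le1[OF s] s by (auto intro: antisym)
next
  fix s assume "s \<in> {s \<in> space M. rinf B s = 1}"
  then have s: "s \<in> space M" and r: "rinf B s = 1" by auto
  show "s \<in> avoid_set M K B"
    unfolding avoid_set_def using s ev_set_run[OF B s] r by simp
qed

lemma avoid_sets: "B \<in> sets M \<Longrightarrow> avoid_set M K B \<in> sets M"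
  unfolding avoid_eq by measurable

lemma decisive_generic:
  assumes B: "B \<in> sets M"
    and zero: "\<And>s. s \<in> space M \<Longrightarrow> (INF m. cyl_prob K (\<lambda>_. space M - B - avoid_set M K B) m s) = 0"
  shows "decisive M K B"
  unfolding decisive_def
proof (intro allI impI, elim conjE)
  fix \<mu> P assume p\<mu>: "prob_space \<mu>" and s\<mu>: "sets \<mu> = sets M" and run: "is_run_measure M K \<mu> P"
  have sP: "sets P = sets (stream_space M)"
    using run unfolding is_run_measure_def by (elim conjE)
  have pP: "prob_space P"
    using run unfolding is_run_measure_def by (elim conjE)
  interpret P: prob_space P by (rule pP)
  interpret mu: prob_space \<mu> by (rule p\<mu>)
  have spP: "space P = space (stream_space M)" using sets_eq_imp_space_eq[OF sP] .
  define C0 where "C0 = space M - B - avoid_set M K B"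
  have C0m: "C0 \<in> sets M" unfolding C0_def using B avoid_sets[OF B] by auto
  define N where "N = {\<omega> \<in> space (stream_space M). \<forall>i. \<omega> !! i \<in> C0}"
  have Nm: "N \<in> sets P" unfolding N_def sP by (rule stream_all_sets[OF C0m])
  have "emeasure P N = (\<integral>\<^sup>+x. (INF m. cyl_prob K (\<lambda>_. C0) m x) \<partial>\<mu>)"
    unfolding N_def by (rule run_all[OF run C0m s\<mu>]) simp
  also have "\<dots> = (\<integral>\<^sup>+x. 0 \<partial>\<mu>)"
    by (rule nn_integral_cong) (simp add: C0_def zero sets_eq_imp_space_eq[OF s\<mu>])
  finally have eN: "emeasure P N = 0" by simp
  have eq: "ev_set M B \<union> ev_set M (avoid_set M K B) = space P - N"
  proof (rule set_eqI)
    fix \<omega> show "\<omega> \<in> ev_set M B \<union> ev_set M (avoid_set M K B) \<longleftrightarrow> \<omega> \<in> space P - N"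
      unfolding ev_set_def N_def spP C0_def using stream_snth_space[of \<omega>] by auto
  qed
  show "emeasure P (ev_set M B \<union> ev_set M (avoid_set M K B)) = 1"
    unfolding eq using Nm eN by (simp add: emeasure_compl[OF Nm] P.emeasure_space_1)
qed

end

lemma ennreal_mul_inv_cancel: "(c::ennreal) \<noteq> 0 \<Longrightarrow> c \<noteq> top \<Longrightarrow> c * (inverse c * x) = x"
  by (metis divide_ennreal_def ennreal_divide_self mult.left_commute
    mult.right_neutral top.not_eq_extremum)

lemma nn_integral_superadd:
  "integral\<^sup>N N f + integral\<^sup>N N g \<le> (\<integral>\<^sup>+x. f x + g x \<partial>N)"
proof -
  let ?A = "{a. simple_function N a \<and> a \<le> f}" and ?B = "{b. simple_function N b \<and> b \<le> g}"
  have neA: "?A \<noteq> {}" by (auto intro!: exI[of _ "\<lambda>_. 0"] simp: le_fun_def)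
  have neB: "?B \<noteq> {}" by (auto intro!: exI[of _ "\<lambda>_. 0"] simp: le_fun_def)
  have "integral\<^sup>N N f + integral\<^sup>N N g = (SUP a\<in>?A. integral\<^sup>S N a) + (SUP b\<in>?B. integral\<^sup>S N b)"
    unfolding nn_integral_def ..
  also have "\<dots> = (SUP a\<in>?A. integral\<^sup>S N a + (SUP b\<in>?B. integral\<^sup>S N b))"
    using neA by (rule ennreal_SUP_add_left[symmetric])
  also have "\<dots> \<le> (\<integral>\<^sup>+x. f x + g x \<partial>N)"
  proof (rule SUP_least)
    fix a assume a: "a \<in> ?A"
    have "integral\<^sup>S N a + (SUP b\<in>?B. integral\<^sup>S N b) = (SUP b\<in>?B. integral\<^sup>S N a + integral\<^sup>S N b)"
      using neB by (rule ennreal_SUP_add_right)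
    also have "\<dots> \<le> (\<integral>\<^sup>+x. f x + g x \<partial>N)"
    proof (rule SUP_least)
      fix b assume b: "b \<in> ?B"
      have "integral\<^sup>S N a + integral\<^sup>S N b = (\<integral>\<^sup>Sx. a x + b x \<partial>N)"
        using a b by (intro simple_integral_add[symmetric]) auto
      also have "\<dots> \<le> (\<integral>\<^sup>+x. f x + g x \<partial>N)"
        unfolding nn_integral_def
        using a b by (intro SUP_upper) (auto simp: le_fun_def intro: add_mono)
      finally show "integral\<^sup>S N a + integral\<^sup>S N b \<le> (\<integral>\<^sup>+x. f x + g x \<partial>N)" .
    qed
    finally show "integral\<^sup>S N a + (SUP b\<in>?B. integral\<^sup>S N b) \<le> (\<integral>\<^sup>+x. f x + g x \<partial>N)" .
  qed
  finally show ?thesis .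
qed

lemma nn_integral_superadd_sum:
  assumes "finite I"
  shows "(\<Sum>i\<in>I. integral\<^sup>N N (F i)) \<le> (\<integral>\<^sup>+x. (\<Sum>i\<in>I. F i x) \<partial>N)"
  using assms
proof (induction I rule: finite_induct)
  case empty then show ?case by simp
next
  case (insert i I)
  have "(\<Sum>j\<in>insert i I. integral\<^sup>N N (F j)) = integral\<^sup>N N (F i) + (\<Sum>j\<in>I. integral\<^sup>N N (F j))"
    using insert by simp
  also have "\<dots> \<le> integral\<^sup>N N (F i) + (\<integral>\<^sup>+x. (\<Sum>j\<in>I. F j x) \<partial>N)"
    using insert.IH by (rule add_left_mono)
  also have "\<dots> \<le> (\<integral>\<^sup>+x. F i x + (\<Sum>j\<in>I. F j x) \<partial>N)"
    by (rule nn_integral_superadd)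
  also have "\<dots> = (\<integral>\<^sup>+x. (\<Sum>j\<in>insert i I. F j x) \<partial>N)"
    using insert by simp
  finally show ?case .
qed

lemma nn_integral_cmult_ge:
  "c * integral\<^sup>N N f \<le> (\<integral>\<^sup>+x. c * f x \<partial>N)"
proof -
  let ?A = "{a. simple_function N a \<and> a \<le> f}"
  have "c * integral\<^sup>N N f = (SUP a\<in>?A. c * integral\<^sup>S N a)"
    unfolding nn_integral_def by (rule SUP_mult_left_ennreal)
  also have "\<dots> \<le> (\<integral>\<^sup>+x. c * f x \<partial>N)"
  proof (rule SUP_least)
    fix a assume a: "a \<in> ?A"
    have "c * integral\<^sup>S N a = (\<integral>\<^sup>Sx. c * a x \<partial>N)"
      using a by (intro simple_integral_mult[symmetric]) auto
    also have "\<dots> \<le> (\<integral>\<^sup>+x. c * f x \<partial>N)"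
      unfolding nn_integral_def
      using a by (intro SUP_upper) (auto simp: le_fun_def intro: mult_left_mono)
    finally show "c * integral\<^sup>S N a \<le> (\<integral>\<^sup>+x. c * f x \<partial>N)" .
  qed
  finally show ?thesis .
qed

lemma nn_integral_cmult_le:
  assumes c: "c \<noteq> top"
  shows "(\<integral>\<^sup>+x. c * f x \<partial>N) \<le> c * integral\<^sup>N N f"
proof (cases "c = 0")
  case True then show ?thesis by simp
next
  case False
  have "inverse c * (\<integral>\<^sup>+x. c * f x \<partial>N) \<le> (\<integral>\<^sup>+x. inverse c * (c * f x) \<partial>N)"
    by (rule nn_integral_cmult_ge)
  also have "\<dots> = integral\<^sup>N N f"
  proof -
    have "inverse c * (c * y) = y" for y
      using ennreal_mul_inv_cancel[OF False c, of y] by (simp add: mult.left_commute)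
    then show ?thesis by simp
  qed
  finally have "c * (inverse c * (\<integral>\<^sup>+x. c * f x \<partial>N)) \<le> c * integral\<^sup>N N f"
    by (rule mult_left_mono) simp
  then show ?thesis using ennreal_mul_inv_cancel[OF False c] by simp
qed


lemma mix_bound:
  fixes N :: "('l \<times> 'v::topological_space) measure" and g :: "'v \<Rightarrow> ennreal"
    and c :: "'e \<Rightarrow> 'r \<Rightarrow> ennreal" and mu :: "'r measure" and \<nu> :: "'e \<Rightarrow> 'v measure"
  assumes sN: "sets N = sets (count_space UNIV \<Otimes>\<^sub>M (borel :: 'v measure))"
    and S: "finite S"
    and eq: "\<And>D. D \<in> sets borel \<Longrightarrow> emeasure N ({l} \<times> D) = (\<integral>\<^sup>+\<tau>. (\<Sum>e\<in>S. c e \<tau> * emeasure (\<nu> e) D) \<partial>mu)"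
    and s\<nu>: "\<And>e. e \<in> S \<Longrightarrow> sets (\<nu> e) = sets borel"
    and p\<nu>: "\<And>e. e \<in> S \<Longrightarrow> emeasure (\<nu> e) UNIV = 1"
    and g: "g \<in> borel_measurable borel"
    and bnd: "\<And>e. e \<in> S \<Longrightarrow> (\<integral>\<^sup>+x. g x \<partial>\<nu> e) \<le> T"
    and T: "T \<noteq> top"
  shows "(\<integral>\<^sup>+p. g (snd p) * indicator ({l} \<times> UNIV) p \<partial>N) \<le> T * emeasure N ({l} \<times> UNIV)"
proof -
  obtain u where u: "\<And>i. simple_function borel (u i)" "incseq u" "\<And>i x. u i x < top"
      "\<And>x. (SUP i. u i x) = g x"
    using borel_measurable_implies_simple_function_sequence'[OF g] by blast
  have LU: "{l} \<times> UNIV \<in> sets N" unfolding sN by (rule pair_measureI) auto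
  have sndm: "snd \<in> N \<rightarrow>\<^sub>M (borel :: 'v measure)"
    unfolding measurable_cong_sets[OF sN refl] by (rule measurable_snd)
  have um: "u i \<in> borel_measurable borel" for i using u(1) by (rule borel_measurable_simple_function)
  have Fm: "(\<lambda>p. u i (snd p) * indicator ({l} \<times> UNIV) p) \<in> borel_measurable N" for i
    using LU by (intro borel_measurable_times_ennreal measurable_compose[OF sndm um] borel_measurable_indicator)
  have "(\<integral>\<^sup>+p. g (snd p) * indicator ({l} \<times> UNIV) p \<partial>N) = (\<integral>\<^sup>+p. (SUP i. u i (snd p) * indicator ({l} \<times> UNIV) p) \<partial>N)"
    by (simp add: u(4)[symmetric] SUP_mult_right_ennreal)
  also have "\<dots> = (SUP i. \<integral>\<^sup>+p. u i (snd p) * indicator ({l} \<times> UNIV) p \<partial>N)"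
  proof (rule nn_integral_monotone_convergence_SUP)
    show "incseq (\<lambda>i p. u i (snd p) * indicator ({l} \<times> UNIV) p)"
      using u(2) by (auto simp: incseq_def le_fun_def intro: mult_right_mono)
  qed (rule Fm)
  also have "\<dots> \<le> T * emeasure N ({l} \<times> UNIV)"
  proof (rule SUP_least)
    fix i
    define U where "U = u i"
    define R where "R = U ` UNIV"
    have R: "finite R" unfolding R_def U_def using simple_functionD(1)[OF u(1)[of i]] by simp
    have lev: "U -` {y} \<in> sets borel" for y
      unfolding U_def using simple_functionD(2)[OF u(1)[of i], of "{y}"] by simp
    have rep: "U x = (\<Sum>y\<in>R. y * indicator (U -` {y}) x)" for x
    proof -
      have "U x = (\<Sum>y\<in>U ` space borel. y * indicator (U -` {y} \<inter> space borel) x)"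
        unfolding U_def by (rule simple_function_indicator_representation[OF u(1)]) simp
      then show ?thesis unfolding R_def by (simp only: space_borel Int_UNIV_right)
    qed
    have Ule: "U x \<le> g x" for x unfolding U_def u(4)[symmetric] by (rule SUP_upper) simp
    have lev2: "{l} \<times> (U -` {y}) \<in> sets N" for y unfolding sN by (rule pair_measureI) (auto simp: lev)
    have "(\<integral>\<^sup>+p. u i (snd p) * indicator ({l} \<times> UNIV) p \<partial>N)
        = (\<integral>\<^sup>+p. (\<Sum>y\<in>R. y * indicator ({l} \<times> (U -` {y})) p) \<partial>N)"
    proof (rule nn_integral_cong)
      fix p :: "'l \<times> 'v"
      have "u i (snd p) * indicator ({l} \<times> UNIV) p = (\<Sum>y\<in>R. y * indicator (U -` {y}) (snd p)) * indicator ({l} \<times> UNIV) p"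
        using rep[of "snd p"] unfolding U_def by simp
      also have "\<dots> = (\<Sum>y\<in>R. y * indicator ({l} \<times> (U -` {y})) p)"
        unfolding sum_distrib_right
        by (intro sum.cong refl) (auto simp: indicator_def)
      finally show "u i (snd p) * indicator ({l} \<times> UNIV) p = (\<Sum>y\<in>R. y * indicator ({l} \<times> (U -` {y})) p)" .
    qed
    also have "\<dots> = (\<Sum>y\<in>R. y * emeasure N ({l} \<times> (U -` {y})))"
      using lev2 by (subst nn_integral_sum) (auto simp: nn_integral_cmult_indicator)
    also have "\<dots> = (\<Sum>y\<in>R. y * (\<integral>\<^sup>+\<tau>. (\<Sum>e\<in>S. c e \<tau> * emeasure (\<nu> e) (U -` {y})) \<partial>mu))"
      using lev by (simp add: eq)
    also have "\<dots> \<le> (\<Sum>y\<in>R. (\<integral>\<^sup>+\<tau>. y * (\<Sum>e\<in>S. c e \<tau> * emeasure (\<nu> e) (U -` {y})) \<partial>mu))"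
      by (intro sum_mono nn_integral_cmult_ge)
    also have "\<dots> \<le> (\<integral>\<^sup>+\<tau>. (\<Sum>y\<in>R. y * (\<Sum>e\<in>S. c e \<tau> * emeasure (\<nu> e) (U -` {y}))) \<partial>mu)"
      using R by (rule nn_integral_superadd_sum)
    also have "\<dots> = (\<integral>\<^sup>+\<tau>. (\<Sum>e\<in>S. c e \<tau> * (\<Sum>y\<in>R. y * emeasure (\<nu> e) (U -` {y}))) \<partial>mu)"
    proof (rule nn_integral_cong)
      fix \<tau>
      show "(\<Sum>y\<in>R. y * (\<Sum>e\<in>S. c e \<tau> * emeasure (\<nu> e) (U -` {y})))
          = (\<Sum>e\<in>S. c e \<tau> * (\<Sum>y\<in>R. y * emeasure (\<nu> e) (U -` {y})))"
      proof -
        have "(\<Sum>y\<in>R. y * (\<Sum>e\<in>S. c e \<tau> * emeasure (\<nu> e) (U -` {y})))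
            = (\<Sum>y\<in>R. \<Sum>e\<in>S. y * (c e \<tau> * emeasure (\<nu> e) (U -` {y})))"
          by (simp add: sum_distrib_left)
        also have "\<dots> = (\<Sum>e\<in>S. \<Sum>y\<in>R. y * (c e \<tau> * emeasure (\<nu> e) (U -` {y})))"
          by (rule sum.swap)
        also have "\<dots> = (\<Sum>e\<in>S. c e \<tau> * (\<Sum>y\<in>R. y * emeasure (\<nu> e) (U -` {y})))"
          by (simp add: sum_distrib_left mult.left_commute)
        finally show ?thesis .
      qed
    qed
    also have "\<dots> \<le> (\<integral>\<^sup>+\<tau>. (\<Sum>e\<in>S. c e \<tau> * T) \<partial>mu)"
    proof (intro nn_integral_mono sum_mono mult_left_mono)
      fix e assume e: "e \<in> S"
      have Um\<nu>: "U -` {y} \<in> sets (\<nu> e)" for y using lev s\<nu>[OF e] by simp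
      have "(\<Sum>y\<in>R. y * emeasure (\<nu> e) (U -` {y})) = (\<integral>\<^sup>+x. (\<Sum>y\<in>R. y * indicator (U -` {y}) x) \<partial>\<nu> e)"
        using Um\<nu> by (subst nn_integral_sum) (auto simp: nn_integral_cmult_indicator)
      also have "\<dots> = (\<integral>\<^sup>+x. U x \<partial>\<nu> e)" by (intro nn_integral_cong) (rule rep[symmetric])
      also have "\<dots> \<le> (\<integral>\<^sup>+x. g x \<partial>\<nu> e)" by (intro nn_integral_mono Ule)
      also have "\<dots> \<le> T" using bnd[OF e] .
      finally show "(\<Sum>y\<in>R. y * emeasure (\<nu> e) (U -` {y})) \<le> T" .
    qed simp
    also have "\<dots> = (\<integral>\<^sup>+\<tau>. T * (\<Sum>e\<in>S. c e \<tau> * emeasure (\<nu> e) UNIV) \<partial>mu)"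
      by (intro nn_integral_cong) (simp add: p\<nu> sum_distrib_left mult_ac)
    also have "\<dots> \<le> T * (\<integral>\<^sup>+\<tau>. (\<Sum>e\<in>S. c e \<tau> * emeasure (\<nu> e) UNIV) \<partial>mu)"
      using T by (rule nn_integral_cmult_le)
    also have "\<dots> = T * emeasure N ({l} \<times> UNIV)" by (simp add: eq)
    finally show "(\<integral>\<^sup>+p. u i (snd p) * indicator ({l} \<times> UNIV) p \<partial>N) \<le> T * emeasure N ({l} \<times> UNIV)" .
  qed
  finally show ?thesis .
qed

context mkern begin

definition hinf :: "'s set \<Rightarrow> 's \<Rightarrow> ennreal" where
  "hinf C s = (INF m. cyl_prob K (\<lambda>_. C) m s)"

lemma hinf_meas: "C \<in> sets M \<Longrightarrow> hinf C \<in> borel_measurable M"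
  unfolding hinf_def by (intro borel_measurable_INF cyl_meas) auto

lemma hinf_le_ind: "hinf C s \<le> indicator C s"
  unfolding hinf_def by (rule INF_lower2[of 0]) simp_all

lemma hinf_le1: "hinf C s \<le> 1"
  using hinf_le_ind[of C s] by (rule order_trans) (simp add: indicator_def)

lemma hinf_step:
  assumes C: "C \<in> sets M" and s: "s \<in> space M"
  shows "hinf C s \<le> indicator C s * (\<integral>\<^sup>+t. hinf C t \<partial>K s)"
proof -
  interpret Ks: prob_space "K s" using K_prob[OF s] .
  have "hinf C s \<le> (INF m. cyl_prob K (\<lambda>_. C) (Suc m) s)"
    unfolding hinf_def by (rule INF_mono) blast
  also have "\<dots> = (INF m. indicator C s * (\<integral>\<^sup>+t. cyl_prob K (\<lambda>_. C) m t \<partial>K s))"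
    by simp
  also have "\<dots> = indicator C s * (INF m. (\<integral>\<^sup>+t. cyl_prob K (\<lambda>_. C) m t \<partial>K s))"
    by (cases "s \<in> C") simp_all
  also have "(INF m. (\<integral>\<^sup>+t. cyl_prob K (\<lambda>_. C) m t \<partial>K s)) = (\<integral>\<^sup>+t. hinf C t \<partial>K s)"
    unfolding hinf_def
  proof (rule nn_integral_monotone_convergence_INF_AE[symmetric])
    show "AE x in K s. cyl_prob K (\<lambda>_. C) (Suc i) x \<le> cyl_prob K (\<lambda>_. C) i x" for i
      by (rule AE_I2) (rule cyl_Suc_le, simp add: space_K[OF s])
    show "cyl_prob K (\<lambda>_. C) i \<in> borel_measurable (K s)" for i
      unfolding measurable_cong_sets[OF sets_K[OF s] refl] by (rule cyl_meas) (rule C)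
    have "(\<integral>\<^sup>+t. cyl_prob K (\<lambda>_. C) 0 t \<partial>K s) \<le> (\<integral>\<^sup>+t. 1 \<partial>K s)"
      by (intro nn_integral_mono) (simp add: indicator_def)
    also have "\<dots> < \<infinity>" by (simp add: Ks.emeasure_space_1)
    finally show "(\<integral>\<^sup>+t. cyl_prob K (\<lambda>_. C) 0 t \<partial>K s) < \<infinity>" .
  qed
  finally show ?thesis .
qed

lemma hinf_bound:
  assumes C: "C \<in> sets M" and bnd: "\<And>t. t \<in> space M \<Longrightarrow> hinf C t \<le> c" and s: "s \<in> space M"
  shows "hinf C s \<le> c * cyl_prob K (\<lambda>_. C) N s"
  using s
proof (induction N arbitrary: s)
  case 0
  interpret Ks: prob_space "K s" using K_prob[OF 0] .
  have "hinf C s \<le> indicator C s * (\<integral>\<^sup>+t. hinf C t \<partial>K s)" by (rule hinf_step[OF C 0])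
  also have "\<dots> \<le> indicator C s * (\<integral>\<^sup>+t. c \<partial>K s)"
    by (intro mult_left_mono nn_integral_mono bnd) (auto simp: space_K[OF 0])
  also have "\<dots> = c * cyl_prob K (\<lambda>_. C) 0 s" by (simp add: Ks.emeasure_space_1 mult.commute)
  finally show ?case .
next
  case (Suc N)
  have "hinf C s \<le> indicator C s * (\<integral>\<^sup>+t. hinf C t \<partial>K s)" by (rule hinf_step[OF C Suc.prems])
  also have "\<dots> \<le> indicator C s * (\<integral>\<^sup>+t. c * cyl_prob K (\<lambda>_. C) N t \<partial>K s)"
    by (intro mult_left_mono nn_integral_mono Suc.IH) (auto simp: space_K[OF Suc.prems])
  also have "(\<integral>\<^sup>+t. c * cyl_prob K (\<lambda>_. C) N t \<partial>K s) = c * (\<integral>\<^sup>+t. cyl_prob K (\<lambda>_. C) N t \<partial>K s)"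
    by (rule nn_integral_cmult)
       (simp add: measurable_cong_sets[OF sets_K[OF Suc.prems] refl] cyl_meas C)
  also have "indicator C s * (c * (\<integral>\<^sup>+t. cyl_prob K (\<lambda>_. C) N t \<partial>K s)) = c * cyl_prob K (\<lambda>_. C) (Suc N) s"
    by (simp add: mult_ac)
  finally show ?case .
qed

end

locale shs_ctx =
  fixes E :: "('l::finite \<times> 'a \<times> 'l) set"
    and Inv :: "'l \<Rightarrow> (real ^ 'n) set"
    and \<gamma> :: "'l \<Rightarrow> real ^ 'n \<Rightarrow> real \<Rightarrow> real ^ 'n"
    and G :: "'l \<times> 'a \<times> 'l \<Rightarrow> (real ^ 'n) set"
    and R :: "'l \<times> 'a \<times> 'l \<Rightarrow> real ^ 'n \<Rightarrow> (real ^ 'n) set"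
    and \<mu> :: "'l \<times> (real ^ 'n) \<Rightarrow> real measure"
    and w :: "'l \<times> (real ^ 'n) \<Rightarrow> ('l \<times> 'a \<times> 'l) pmf"
    and \<eta> :: "'l \<times> 'a \<times> 'l \<Rightarrow> real ^ 'n \<Rightarrow> (real ^ 'n) measure"
    and K :: "'l \<times> (real ^ 'n) \<Rightarrow> ('l \<times> (real ^ 'n)) measure"
  assumes shs: "is_shs_sts E Inv \<gamma> G R \<mu> w \<eta> K"
    and cr: "cycle_reset E \<eta>"
begin

lemma finE: "finite E" using shs unfolding is_shs_sts_def by blast

lemma Kmeas: "K \<in> shs_space \<rightarrow>\<^sub>M prob_algebra shs_space"
  using shs unfolding is_shs_sts_def by blast

lemma kform: "D \<in> sets borel \<Longrightarrow> emeasure (K s) ({l'} \<times> D) =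
          (\<integral>\<^sup>+ \<tau>. ennreal (\<Sum>e\<in>{e \<in> E. src e = fst s \<and> tgt e = l'}.
               pmf (w (shift \<gamma> s \<tau>)) e * measure (\<eta> e (\<gamma> (fst s) (snd s) \<tau>)) D) \<partial>(\<mu> s))"
  using shs unfolding is_shs_sts_def by blast

lemma eta_prob: "prob_space (\<eta> e v)" using shs unfolding is_shs_sts_def by blast
lemma eta_sets: "sets (\<eta> e v) = sets borel" using shs unfolding is_shs_sts_def by blast

lemma eta_space: "space (\<eta> e v) = UNIV"
  using sets_eq_imp_space_eq[OF eta_sets] by simp

lemma sets_shs: "sets (shs_space :: ('l \<times> (real ^ 'n)) measure) = sets (count_space UNIV \<Otimes>\<^sub>M (borel :: (real ^ 'n) measure))"
  unfolding shs_space_def ..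

lemma space_shs: "space (shs_space :: ('l \<times> (real ^ 'n)) measure) = UNIV"
  unfolding shs_space_def by (simp add: space_pair_measure)

lemma box_sets: "D \<in> sets borel \<Longrightarrow> {l} \<times> D \<in> sets (shs_space :: ('l \<times> (real ^ 'n)) measure)"
  unfolding shs_space_def by (rule pair_measureI) auto

sublocale mk: mkern shs_space K
  by unfold_locales (rule Kmeas)

definition SRarc :: "'l \<Rightarrow> 'l \<Rightarrow> bool" where
  "SRarc l l' \<longleftrightarrow> (\<forall>a. (l, a, l') \<in> E \<longrightarrow> strongly_reset \<eta> (l, a, l'))"

definition SRE :: "('l \<times> 'a \<times> 'l) set" where
  "SRE = {e \<in> E. SRarc (src e) (tgt e)}"

definition vv :: "('l \<times> (real ^ 'n) \<Rightarrow> ennreal) \<Rightarrow> 'l \<times> 'a \<times> 'l \<Rightarrow> ennreal" where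
  "vv h e = (\<integral>\<^sup>+x. h (tgt e, x) \<partial>\<eta> e 0)"

definition HH :: "('l \<times> (real ^ 'n) \<Rightarrow> ennreal) \<Rightarrow> ennreal" where
  "HH h = Max (insert 0 (vv h ` SRE))"

lemma finSRE: "finite SRE" unfolding SRE_def using finE by simp

lemma vv_le_HH: "e \<in> SRE \<Longrightarrow> vv h e \<le> HH h"
  unfolding HH_def using finSRE by (intro Max_ge) auto

lemma HH_le1: assumes "\<And>s. h s \<le> 1" shows "HH h \<le> 1"
  unfolding HH_def using finSRE
proof (subst Max_le_iff) 
  show "\<forall>a\<in>insert 0 (vv h ` SRE). a \<le> 1"
  proof
    fix a assume "a \<in> insert 0 (vv h ` SRE)"
    then consider "a = 0" | e where "a = vv h e" by blast
    then show "a \<le> 1"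
    proof cases
      case 2
      interpret prob_space "\<eta> e 0" by (rule eta_prob)
      have "vv h e \<le> (\<integral>\<^sup>+x. 1 \<partial>\<eta> e 0)" unfolding vv_def by (intro nn_integral_mono assms)
      then show ?thesis using 2 by (simp add: emeasure_space_1)
    qed simp
  qed
qed auto

lemma wf_NR: "wf {(l', l). \<exists>a. (l, a, l') \<in> E \<and> \<not> strongly_reset \<eta> (l, a, l')}"
proof -
  define F where "F = {(l, l'). \<exists>a. (l, a, l') \<in> E \<and> \<not> strongly_reset \<eta> (l, a, l')}"
  have eq: "{(l', l). \<exists>a. (l, a, l') \<in> E \<and> \<not> strongly_reset \<eta> (l, a, l')} = F\<inverse>"
    unfolding F_def by auto
  have "acyclic F"
    unfolding acyclic_def
  proof (intro allI notI)
    fix x assume "(x, x) \<in> F\<^sup>+"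
    then obtain n where n: "n > 0" "(x, x) \<in> F ^^ n" using trancl_power by blast
    then obtain f where f: "f 0 = x" "f n = x" "\<And>i. i < n \<Longrightarrow> (f i, f (Suc i)) \<in> F"
      using relpow_fun_conv by metis
    define xs where "xs = map f [0..<Suc n]"
    have len: "length xs = Suc n" unfolding xs_def by simp
    have nth: "i < Suc n \<Longrightarrow> xs ! i = f i" for i unfolding xs_def by (simp del: upt_Suc)
    have "loc_cycle E xs"
      unfolding loc_cycle_def
    proof (intro conjI allI impI)
      show "2 \<le> length xs" using n len by simp
      show "hd xs = last xs" using f unfolding xs_def by (simp add: hd_map last_map del: upt_Suc)
      fix i assume "Suc i < length xs"
      then have i: "i < n" using len by simp
      then obtain a where "(f i, a, f (Suc i)) \<in> E" using f(3)[OF i] unfolding F_def by blast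
      then show "loc_arc E (xs ! i) (xs ! Suc i)" using i nth unfolding loc_arc_def by auto
    qed
    then obtain i where i: "Suc i < length xs"
      and sr: "\<And>a. (xs ! i, a, xs ! Suc i) \<in> E \<Longrightarrow> strongly_reset \<eta> (xs ! i, a, xs ! Suc i)"
      using cr unfolding cycle_reset_def by blast
    have i': "i < n" using i len by simp
    obtain a where "(f i, a, f (Suc i)) \<in> E" "\<not> strongly_reset \<eta> (f i, a, f (Suc i))"
      using f(3)[OF i'] unfolding F_def by blast
    then show False using sr[of a] nth[of i] nth[of "Suc i"] i' by simp
  qed
  moreover have "finite F" by simp
  ultimately show ?thesis unfolding eq by (intro finite_acyclic_wf) auto
qed


lemma sets_K': "sets (K s) = sets (shs_space :: ('l \<times> (real ^ 'n)) measure)"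
  using mk.sets_K[of s] space_shs by simp

lemma K_prob': "prob_space (K s)"
  using mk.K_prob[of s] space_shs by simp

lemma kform_SR:
  assumes sr: "SRarc (fst s) l'" and D: "D \<in> sets borel"
  shows "emeasure (K s) ({l'} \<times> D) =
    (\<integral>\<^sup>+\<tau>. (\<Sum>e\<in>{e \<in> E. src e = fst s \<and> tgt e = l'}. ennreal (pmf (w (shift \<gamma> s \<tau>)) e) * emeasure (\<eta> e 0) D) \<partial>\<mu> s)"
proof -
  have "emeasure (K s) ({l'} \<times> D) = (\<integral>\<^sup>+ \<tau>. ennreal (\<Sum>e\<in>{e \<in> E. src e = fst s \<and> tgt e = l'}.
               pmf (w (shift \<gamma> s \<tau>)) e * measure (\<eta> e (\<gamma> (fst s) (snd s) \<tau>)) D) \<partial>(\<mu> s))"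
    by (rule kform[OF D])
  also have "\<dots> = (\<integral>\<^sup>+\<tau>. (\<Sum>e\<in>{e \<in> E. src e = fst s \<and> tgt e = l'}. ennreal (pmf (w (shift \<gamma> s \<tau>)) e) * emeasure (\<eta> e 0) D) \<partial>\<mu> s)"
  proof (rule nn_integral_cong)
    fix \<tau>
    have eta_eq: "\<eta> e (\<gamma> (fst s) (snd s) \<tau>) = \<eta> e 0" if e: "e \<in> {e \<in> E. src e = fst s \<and> tgt e = l'}" for e
    proof -
      obtain l a l2 where e3: "e = (l, a, l2)" by (cases e) auto
      have "(fst s, a, l') \<in> E" "e = (fst s, a, l')" using e e3 by (auto simp: src_def tgt_def)
      then have "strongly_reset \<eta> e" using sr unfolding SRarc_def by auto
      then show ?thesis unfolding strongly_reset_def by blast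
    qed
    have "ennreal (\<Sum>e\<in>{e \<in> E. src e = fst s \<and> tgt e = l'}. pmf (w (shift \<gamma> s \<tau>)) e * measure (\<eta> e (\<gamma> (fst s) (snd s) \<tau>)) D)
        = (\<Sum>e\<in>{e \<in> E. src e = fst s \<and> tgt e = l'}. ennreal (pmf (w (shift \<gamma> s \<tau>)) e * measure (\<eta> e (\<gamma> (fst s) (snd s) \<tau>)) D))"
      by (rule sum_ennreal[symmetric]) simp
    also have "\<dots> = (\<Sum>e\<in>{e \<in> E. src e = fst s \<and> tgt e = l'}. ennreal (pmf (w (shift \<gamma> s \<tau>)) e) * emeasure (\<eta> e 0) D)"
    proof (rule sum.cong[OF refl])
      fix e assume e: "e \<in> {e \<in> E. src e = fst s \<and> tgt e = l'}"
      interpret prob_space "\<eta> e 0" by (rule eta_prob)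
      show "ennreal (pmf (w (shift \<gamma> s \<tau>)) e * measure (\<eta> e (\<gamma> (fst s) (snd s) \<tau>)) D)
          = ennreal (pmf (w (shift \<gamma> s \<tau>)) e) * emeasure (\<eta> e 0) D"
        unfolding eta_eq[OF e] by (simp add: ennreal_mult emeasure_eq_measure)
    qed
    finally show "ennreal (\<Sum>e\<in>{e \<in> E. src e = fst s \<and> tgt e = l'}. pmf (w (shift \<gamma> s \<tau>)) e * measure (\<eta> e (\<gamma> (fst s) (snd s) \<tau>)) D)
        = (\<Sum>e\<in>{e \<in> E. src e = fst s \<and> tgt e = l'}. ennreal (pmf (w (shift \<gamma> s \<tau>)) e) * emeasure (\<eta> e 0) D)" .
  qed
  finally show ?thesis .
qed

lemma lemW:
  fixes h :: "'l \<times> (real ^ 'n) \<Rightarrow> ennreal" and s :: "'l \<times> (real ^ 'n)"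
  assumes hm: "h \<in> borel_measurable (shs_space :: ('l \<times> (real ^ 'n)) measure)"
    and h1: "\<And>s. h s \<le> 1"
    and hstep: "\<And>s. h s \<le> (\<integral>\<^sup>+t. h t \<partial>K s)"
  shows "h s \<le> HH h"
proof -
  obtain l0 x0 where s: "s = (l0, x0)" by (cases s) auto
  have "\<forall>x. h (l0, x) \<le> HH h"
  proof (induction l0 rule: wf_induct[OF wf_NR])
    case (1 l)
    show ?case
    proof
      fix x :: "real ^ 'n"
      define s where "s = (l, x)"
      interpret Ks: prob_space "K s" by (rule K_prob')
      have hmK: "h \<in> borel_measurable (K s)" unfolding measurable_cong_sets[OF sets_K' refl] by (rule hm)
      have boxK: "{l'} \<times> UNIV \<in> sets (K s)" for l' unfolding sets_K' by (rule box_sets) simp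
      have "h s \<le> (\<integral>\<^sup>+t. h t \<partial>K s)" by (rule hstep)
      also have "\<dots> = (\<integral>\<^sup>+t. (\<Sum>l'\<in>UNIV. h t * indicator ({l'} \<times> UNIV) t) \<partial>K s)"
      proof (rule nn_integral_cong)
        fix t :: "'l \<times> (real ^ 'n)"
        have "(\<Sum>l'\<in>UNIV. h t * indicator ({l'} \<times> UNIV) t) = (\<Sum>l'\<in>UNIV. if l' = fst t then h t else 0)"
          by (intro sum.cong refl) (cases t, auto simp: indicator_def)
        also have "\<dots> = h t" by simp
        finally show "h t = (\<Sum>l'\<in>UNIV. h t * indicator ({l'} \<times> UNIV) t)" by simp
      qed
      also have "\<dots> = (\<Sum>l'\<in>UNIV. \<integral>\<^sup>+t. h t * indicator ({l'} \<times> UNIV) t \<partial>K s)"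
        using hmK boxK by (intro nn_integral_sum) auto
      also have "\<dots> \<le> (\<Sum>l'\<in>UNIV. \<integral>\<^sup>+t. HH h * indicator ({l'} \<times> UNIV) t \<partial>K s)"
      proof (rule sum_mono)
        fix l' :: 'l
        show "(\<integral>\<^sup>+t. h t * indicator ({l'} \<times> UNIV) t \<partial>K s) \<le> (\<integral>\<^sup>+t. HH h * indicator ({l'} \<times> UNIV) t \<partial>K s)"
        proof (cases "\<exists>a. (l, a, l') \<in> E \<and> \<not> strongly_reset \<eta> (l, a, l')")
          case True
          then have IH: "\<forall>y. h (l', y) \<le> HH h" using 1 by blast
          show ?thesis
          proof (rule nn_integral_mono)
            fix t :: "'l \<times> (real ^ 'n)"
            show "h t * indicator ({l'} \<times> UNIV) t \<le> HH h * indicator ({l'} \<times> UNIV) t"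
              using IH by (cases t) (auto simp: indicator_def)
          qed
        next
          case False
          then have sr: "SRarc (fst s) l'" unfolding SRarc_def s_def by auto
          have "(\<integral>\<^sup>+t. h t * indicator ({l'} \<times> UNIV) t \<partial>K s) = (\<integral>\<^sup>+t. (\<lambda>y. h (l', y)) (snd t) * indicator ({l'} \<times> UNIV) t \<partial>K s)"
            by (intro nn_integral_cong) (auto simp: indicator_def)
          also have "\<dots> \<le> HH h * emeasure (K s) ({l'} \<times> UNIV)"
          proof (rule mix_bound[where S = "{e \<in> E. src e = fst s \<and> tgt e = l'}" and \<nu> = "\<lambda>e. \<eta> e 0" and mu = "\<mu> s"
                and c = "\<lambda>e \<tau>. ennreal (pmf (w (shift \<gamma> s \<tau>)) e)"])
            show "sets (K s) = sets (count_space UNIV \<Otimes>\<^sub>M (borel :: (real ^ 'n) measure))"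
              unfolding sets_K' by (rule sets_shs)
            show "finite {e \<in> E. src e = fst s \<and> tgt e = l'}" using finE by simp
            show "emeasure (K s) ({l'} \<times> D) = (\<integral>\<^sup>+\<tau>. (\<Sum>e\<in>{e \<in> E. src e = fst s \<and> tgt e = l'}. ennreal (pmf (w (shift \<gamma> s \<tau>)) e) * emeasure (\<eta> e 0) D) \<partial>\<mu> s)"
              if "D \<in> sets borel" for D by (rule kform_SR[OF sr that])
            show "sets (\<eta> e 0) = sets borel" for e by (rule eta_sets)
            show "emeasure (\<eta> e 0) UNIV = 1" for e
              using prob_space.emeasure_space_1[OF eta_prob[of e 0]] eta_space by simp
            have "(\<lambda>y. (l', y)) \<in> (borel :: (real ^ 'n) measure) \<rightarrow>\<^sub>M shs_space"
              unfolding measurable_cong_sets[OF refl sets_shs] by measurable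
            then show "(\<lambda>y. h (l', y)) \<in> borel_measurable borel"
              using hm by (rule measurable_compose)
            show "(\<integral>\<^sup>+x. h (l', x) \<partial>\<eta> e 0) \<le> HH h" if e: "e \<in> {e \<in> E. src e = fst s \<and> tgt e = l'}" for e
            proof -
              have "e \<in> SRE" using e sr unfolding SRE_def by auto
              then have "vv h e \<le> HH h" by (rule vv_le_HH)
              then show ?thesis using e unfolding vv_def by simp
            qed
            show "HH h \<noteq> top" using HH_le1[of h, OF h1] by (auto simp: top_unique)
          qed
          also have "\<dots> = (\<integral>\<^sup>+t. HH h * indicator ({l'} \<times> UNIV) t \<partial>K s)"
            using boxK by (simp add: nn_integral_cmult_indicator)
          finally show ?thesis .
        qed
      qed
      also have "\<dots> = (\<integral>\<^sup>+t. (\<Sum>l'\<in>UNIV. HH h * indicator ({l'} \<times> UNIV) t) \<partial>K s)"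
        using boxK by (intro nn_integral_sum[symmetric]) auto
      also have "\<dots> = (\<integral>\<^sup>+t. HH h \<partial>K s)"
      proof (rule nn_integral_cong)
        fix t :: "'l \<times> (real ^ 'n)"
        have "(\<Sum>l'\<in>UNIV. HH h * indicator ({l'} \<times> UNIV) t) = (\<Sum>l'\<in>UNIV. if l' = fst t then HH h else 0)"
          by (intro sum.cong refl) (cases t, auto simp: indicator_def)
        also have "\<dots> = HH h" by simp
        finally show "(\<Sum>l'\<in>UNIV. HH h * indicator ({l'} \<times> UNIV) t) = HH h" .
      qed
      also have "\<dots> = HH h" by (simp add: Ks.emeasure_space_1)
      finally show "h (l, x) \<le> HH h" unfolding s_def .
    qed
  qed
  then show ?thesis unfolding s by blast
qed

end

context shs_ctx begin

lemma pair_meas: "(\<lambda>x. (l', x)) \<in> (borel :: (real ^ 'n) measure) \<rightarrow>\<^sub>M (shs_space :: ('l \<times> (real ^ 'n)) measure)"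
  unfolding measurable_cong_sets[OF refl sets_shs] by measurable

lemma pair_meas_eta: "(\<lambda>x. (l', x)) \<in> \<eta> e v \<rightarrow>\<^sub>M (shs_space :: ('l \<times> (real ^ 'n)) measure)"
  unfolding measurable_cong_sets[OF eta_sets refl] by (rule pair_meas)

lemma hinf_zero:
  assumes B: "B \<in> sets (shs_space :: ('l \<times> (real ^ 'n)) measure)"
  shows "mk.hinf (space shs_space - B - avoid_set shs_space K B) s = 0"
proof -
  define Av where "Av = avoid_set shs_space K B"
  have Avm: "Av \<in> sets shs_space" unfolding Av_def by (rule mk.avoid_sets[OF B])
  have Av_eq: "Av = {s \<in> space shs_space. mk.rinf B s = 1}" unfolding Av_def by (rule mk.avoid_eq[OF B])
  define C0 where "C0 = space shs_space - B - Av"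
  have C0m: "C0 \<in> sets shs_space" unfolding C0_def using B Avm by auto
  define h where "h = mk.hinf C0"
  have hm: "h \<in> borel_measurable shs_space" unfolding h_def by (rule mk.hinf_meas[OF C0m])
  have h1: "h t \<le> 1" for t unfolding h_def by (rule mk.hinf_le1)
  have hstep: "h t \<le> (\<integral>\<^sup>+u. h u \<partial>K t)" for t
  proof -
    have "h t \<le> indicator C0 t * (\<integral>\<^sup>+u. h u \<partial>K t)"
      unfolding h_def by (rule mk.hinf_step[OF C0m]) (simp add: space_shs)
    also have "\<dots> \<le> (\<integral>\<^sup>+u. h u \<partial>K t)" by (simp add: indicator_def)
    finally show ?thesis .
  qed
  define H where "H = HH h"
  have hH: "h t \<le> H" for t unfolding H_def by (rule lemW[OF hm h1 hstep])
  have H1: "H \<le> 1" unfolding H_def by (rule HH_le1) (rule h1)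
  have bnd: "h p \<le> H * cyl_prob K (\<lambda>_. space shs_space - B) N p" for p N
  proof -
    have "h p \<le> H * cyl_prob K (\<lambda>_. C0) N p"
      unfolding h_def by (rule mk.hinf_bound[OF C0m]) (use hH[unfolded h_def] space_shs in auto)
    also have "\<dots> \<le> H * cyl_prob K (\<lambda>_. space shs_space - B) N p"
      by (intro mult_left_mono mk.cyl_mono_A) (auto simp: C0_def)
    finally show ?thesis .
  qed
  have key: "\<exists>q<1. vv h e \<le> H * q" if e: "e \<in> SRE" for e
  proof -
    define l' where "l' = tgt e"
    interpret eta: prob_space "\<eta> e 0" by (rule eta_prob)
    define f where "f = (\<lambda>N x. cyl_prob K (\<lambda>_. space shs_space - B) N (l', x))"
    have fm: "f N \<in> borel_measurable (\<eta> e 0)" for N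
      unfolding f_def using B by (intro measurable_compose[OF pair_meas_eta mk.cyl_meas]) auto
    have vvle: "vv h e \<le> H * (\<integral>\<^sup>+x. f N x \<partial>\<eta> e 0)" for N
    proof -
      have "vv h e \<le> (\<integral>\<^sup>+x. H * f N x \<partial>\<eta> e 0)"
        unfolding vv_def f_def l'_def by (intro nn_integral_mono bnd)
      also have "\<dots> = H * (\<integral>\<^sup>+x. f N x \<partial>\<eta> e 0)" by (rule nn_integral_cmult[OF fm])
      finally show ?thesis .
    qed
    have rm: "(\<lambda>x. mk.rinf B (l', x)) \<in> borel_measurable (\<eta> e 0)"
      using B by (intro measurable_compose[OF pair_meas_eta mk.rinf_meas])
    have aeq: "(\<integral>\<^sup>+x. mk.rinf B (l', x) \<partial>\<eta> e 0) = (INF N. \<integral>\<^sup>+x. f N x \<partial>\<eta> e 0)"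
      unfolding mk.rinf_def f_def
    proof (rule nn_integral_monotone_convergence_INF_AE)
      show "AE x in \<eta> e 0. cyl_prob K (\<lambda>_. space shs_space - B) (Suc i) (l', x) \<le> cyl_prob K (\<lambda>_. space shs_space - B) i (l', x)" for i
        by (rule AE_I2) (rule mk.cyl_Suc_le, simp add: space_shs)
      show "(\<lambda>x. cyl_prob K (\<lambda>_. space shs_space - B) i (l', x)) \<in> borel_measurable (\<eta> e 0)" for i
        using fm[of i] unfolding f_def .
      have "(\<integral>\<^sup>+x. cyl_prob K (\<lambda>_. space shs_space - B) 0 (l', x) \<partial>\<eta> e 0) \<le> (\<integral>\<^sup>+x. 1 \<partial>\<eta> e 0)"
        by (intro nn_integral_mono) (simp add: indicator_def)
      also have "\<dots> < \<infinity>" by (simp add: eta.emeasure_space_1)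
      finally show "(\<integral>\<^sup>+x. cyl_prob K (\<lambda>_. space shs_space - B) 0 (l', x) \<partial>\<eta> e 0) < \<infinity>" .
    qed
    show ?thesis
    proof (cases "(\<integral>\<^sup>+x. mk.rinf B (l', x) \<partial>\<eta> e 0) < 1")
      case True
      then obtain N where "(\<integral>\<^sup>+x. f N x \<partial>\<eta> e 0) < 1" unfolding aeq by (auto simp: INF_less_iff)
      then show ?thesis using vvle[of N] by blast
    next
      case False
      have rle: "mk.rinf B (l', x) \<le> 1" for x by (rule mk.rinf_le1) (simp add: space_shs)
      have "(\<integral>\<^sup>+x. mk.rinf B (l', x) \<partial>\<eta> e 0) \<le> (\<integral>\<^sup>+x. 1 \<partial>\<eta> e 0)"
        by (intro nn_integral_mono rle)
      then have a1: "(\<integral>\<^sup>+x. mk.rinf B (l', x) \<partial>\<eta> e 0) = 1"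
        using False by (simp add: eta.emeasure_space_1)
      have "(\<integral>\<^sup>+x. 1 - mk.rinf B (l', x) \<partial>\<eta> e 0) = (\<integral>\<^sup>+x. 1 \<partial>\<eta> e 0) - (\<integral>\<^sup>+x. mk.rinf B (l', x) \<partial>\<eta> e 0)"
        using rm a1 rle by (intro nn_integral_diff) auto
      also have "\<dots> = 0" using a1 by (simp add: eta.emeasure_space_1)
      finally have "AE x in \<eta> e 0. 1 - mk.rinf B (l', x) = 0"
        using rm by (subst (asm) nn_integral_0_iff_AE) auto
      then have ae: "AE x in \<eta> e 0. h (l', x) = 0"
      proof (rule AE_mp, intro AE_I2 impI)
        fix x assume "1 - mk.rinf B (l', x) = 0"
        then have "1 \<le> mk.rinf B (l', x)" by (rule ennreal_minus_eq_0)
        then have "mk.rinf B (l', x) = 1" using rle[of x] by (auto intro: antisym)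
        then have "(l', x) \<in> Av" unfolding Av_eq by (simp add: space_shs)
        then have "(l', x) \<notin> C0" unfolding C0_def by auto
        then show "h (l', x) = 0" using mk.hinf_le_ind[of C0 "(l', x)"] unfolding h_def by simp
      qed
      have "vv h e = (\<integral>\<^sup>+x. 0 \<partial>\<eta> e 0)" unfolding vv_def l'_def[symmetric]
        by (rule nn_integral_cong_AE) (rule ae)
      then have "vv h e = H * 0" by simp
      then show ?thesis by (intro exI[of _ 0]) simp
    qed
  qed
  have H0: "H = 0"
  proof (rule ccontr)
    assume Hne: "H \<noteq> 0"
    have "H \<in> insert 0 (vv h ` SRE)" unfolding H_def HH_def using finSRE by (intro Max_in) auto
    then obtain e where e: "e \<in> SRE" and He: "H = vv h e" using Hne by auto
    obtain q where q: "q < 1" and Hq: "vv h e \<le> H * q" using key[OF e] by blast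
    have Hpos: "0 < H" using Hne by (simp add: zero_less_iff_neq_zero)
    have Htop: "H < top" using H1 ennreal_one_less_top by (rule le_less_trans)
    have "H * q < H * 1"
      using q Hpos Htop by (rule ennreal_mult_strict_left_mono)
    then show False using Hq He by simp
  qed
  have "h s \<le> 0" using hH[of s] H0 by simp
  then show ?thesis unfolding h_def C0_def Av_def by simp
qed

end

theorem mainTheorem9:
  fixes E :: "('l::finite \<times> 'a \<times> 'l) set"
    and Inv :: "'l \<Rightarrow> (real ^ 'n) set"
    and \<gamma> :: "'l \<Rightarrow> real ^ 'n \<Rightarrow> real \<Rightarrow> real ^ 'n"
    and G :: "'l \<times> 'a \<times> 'l \<Rightarrow> (real ^ 'n) set"
    and R :: "'l \<times> 'a \<times> 'l \<Rightarrow> real ^ 'n \<Rightarrow> (real ^ 'n) set"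
    and \<mu> :: "'l \<times> (real ^ 'n) \<Rightarrow> real measure"
    and w :: "'l \<times> (real ^ 'n) \<Rightarrow> ('l \<times> 'a \<times> 'l) pmf"
    and \<eta> :: "'l \<times> 'a \<times> 'l \<Rightarrow> real ^ 'n \<Rightarrow> (real ^ 'n) measure"
    and K :: "'l \<times> (real ^ 'n) \<Rightarrow> ('l \<times> (real ^ 'n)) measure"
  assumes "is_shs_sts E Inv \<gamma> G R \<mu> w \<eta> K"
    and "cycle_reset E \<eta>"
  shows "\<forall>B \<in> sets shs_space. decisive shs_space K B"
proof
  interpret S: shs_ctx E Inv \<gamma> G R \<mu> w \<eta> K
    by (rule shs_ctx.intro) (rule assms)+
  fix B :: "('l \<times> (real ^ 'n)) set" assume B: "B \<in> sets shs_space"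
  show "decisive shs_space K B"
  proof (rule S.mk.decisive_generic[OF B])
    fix s :: "'l \<times> (real ^ 'n)"
    show "(INF m. cyl_prob K (\<lambda>_. space shs_space - B - avoid_set shs_space K B) m s) = 0"
      using S.hinf_zero[OF B, of s] unfolding S.mk.hinf_def .
  qed
qed

end
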